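(* Let $\gamma\in\Gamma(2)$ and let $Z\in\mathfrak h_n$ be a point not fixed by any element of $\mathbf{Sp}(2n,\mathbb Z)$ other than $\pm I$. Suppose $\tau(Z)=\gamma Z$. Then there exists $h\in\mathbf{Sp}(2n,\mathbb Z)$ such that $\gamma=\tau(h)h^{-1}$; hence $\mathfrak h_n^\gamma=h\cdot iC_n$.
   Context: $\mathbf{Sp}(2n,\mathbb R)$: real matrices $g=\begin{pmatrix}A&B\\C&D\end{pmatrix}$ with ${}^tgJg=J$, $J=\begin{pmatrix}0&I\\-I&0\end{pmatrix}$, acting on $\mathfrak h_n=\{Z\in M_n(\mathbb C):{}^tZ=Z,\mathrm{Im}Z>0\}$ by $gZ=(AZ+B)(CZ+D)^{-1}$. $\tau\begin{pmatrix}A&B\\C&D\end{pmatrix}=\begin{pmatrix}A&-B\\-C&D\end{pmatrix}$ on matrices and $\tau(Z)=-\overline Z$ on $\mathfrak h_n$. $\mathfrak h_n^\gamma=\{Z:\gamma Z=\tau(Z)\}$. $\Gamma(2)=\{\gamma\in\mathbf{Sp}(2n,\mathbb Z):\gamma\equiv I\bmod 2\}$. $C_n$ is the cone of positive definite real symmetric $n\times n$ matrices, $iC_n=\{iY:Y\in C_n\}$. *)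

theory Defs
  imports "HOL-Analysis.Analysis"
begin

text \<open>Matrices of size 2n x 2n are indexed by the type 'n + 'n: the block
  (Inl,Inl) is A, (Inl,Inr) is B, (Inr,Inl) is C, (Inr,Inr) is D.\<close>

type_synonym 'n bmat = "real^('n + 'n)^('n + 'n)"

definition Jmat :: "('n::finite) bmat" where
  "Jmat = (\<chi> i j. case (i, j) of
      (Inl a, Inr b) \<Rightarrow> (if a = b then 1 else 0)
    | (Inr a, Inl b) \<Rightarrow> (if a = b then -1 else 0)
    | _ \<Rightarrow> 0)"

definition Sp :: "('n::finite) bmat set" where
  "Sp = {g. transpose g ** Jmat ** g = Jmat}"

definition SpZ :: "('n::finite) bmat set" where
  "SpZ = {g. g \<in> Sp \<and> (\<forall>i j. g $ i $ j \<in> \<int>)}"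

definition Gamma2 :: "('n::finite) bmat set" where
  "Gamma2 = {g. g \<in> SpZ \<and> (\<forall>i j. \<exists>k::int. g $ i $ j - mat 1 $ i $ j = 2 * of_int k)}"

definition blkA :: "('n::finite) bmat \<Rightarrow> real^'n^'n" where
  "blkA g = (\<chi> i j. g $ Inl i $ Inl j)"
definition blkB :: "('n::finite) bmat \<Rightarrow> real^'n^'n" where
  "blkB g = (\<chi> i j. g $ Inl i $ Inr j)"
definition blkC :: "('n::finite) bmat \<Rightarrow> real^'n^'n" where
  "blkC g = (\<chi> i j. g $ Inr i $ Inl j)"
definition blkD :: "('n::finite) bmat \<Rightarrow> real^'n^'n" where
  "blkD g = (\<chi> i j. g $ Inr i $ Inr j)"

definition cmat :: "real^'n^'m \<Rightarrow> complex^'n^'m" where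
  "cmat M = (\<chi> i j. complex_of_real (M $ i $ j))"

definition ImM :: "complex^'n^'m \<Rightarrow> real^'n^'m" where
  "ImM Z = (\<chi> i j. Im (Z $ i $ j))"

definition posdef_cone :: "(real^'n^'n) set" where
  "posdef_cone = {Y. transpose Y = Y \<and> (\<forall>x. x \<noteq> 0 \<longrightarrow> x \<bullet> (Y *v x) > 0)}"

definition siegel :: "(complex^('n::finite)^'n) set" where
  "siegel = {Z. transpose Z = Z \<and> ImM Z \<in> posdef_cone}"

definition sp_act :: "('n::finite) bmat \<Rightarrow> complex^'n^'n \<Rightarrow> complex^'n^'n" where
  "sp_act g Z = (cmat (blkA g) ** Z + cmat (blkB g)) **
                 matrix_inv (cmat (blkC g) ** Z + cmat (blkD g))"

definition tau_mat :: "('n::finite) bmat \<Rightarrow> ('n::finite) bmat" where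
  "tau_mat g = (\<chi> i j. case (i, j) of
      (Inl a, Inr b) \<Rightarrow> - g $ i $ j
    | (Inr a, Inl b) \<Rightarrow> - g $ i $ j
    | _ \<Rightarrow> g $ i $ j)"

definition tau_pt :: "complex^'n^'n \<Rightarrow> complex^'n^'n" where
  "tau_pt Z = (\<chi> i j. - cnj (Z $ i $ j))"

definition fixset :: "('n::finite) bmat \<Rightarrow> (complex^'n^'n) set" where
  "fixset \<gamma> = {Z \<in> siegel. sp_act \<gamma> Z = tau_pt Z}"

definition iCn :: "(complex^('n::finite)^'n) set" where
  "iCn = (\<lambda>Y. \<chi> i j. \<i> * complex_of_real (Y $ i $ j)) ` posdef_cone"

end

theory Submission
  imports Defs
begin

lemma sum_UNIV_Plus: "(\<Sum>x\<in>(UNIV::('a::finite+'b::finite) set). f x) = (\<Sum>a\<in>UNIV. f (Inl a)) + (\<Sum>b\<in>UNIV. f (Inr b))"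
proof -
  have "(\<Sum>x\<in>(UNIV::('a+'b) set). f x) = (\<Sum>x\<in>(UNIV <+> UNIV). f x)" by simp
  also have "\<dots> = (\<Sum>a\<in>UNIV. f (Inl a)) + (\<Sum>b\<in>UNIV. f (Inr b))"
    by (subst sum.Plus) (simp_all add: comp_def)
  finally show ?thesis .
qed

lemma sum_delta_mult[simp]:
  fixes f :: "'a::finite \<Rightarrow> 'b::comm_semiring_1"
  shows "(\<Sum>a\<in>UNIV. (if x = a then c else 0) * f a) = c * f x"
    "(\<Sum>a\<in>UNIV. (if a = x then c else 0) * f a) = c * f x"
    "(\<Sum>a\<in>UNIV. f a * (if x = a then c else 0)) = f x * c"
    "(\<Sum>a\<in>UNIV. f a * (if a = x then c else 0)) = f x * c"
  by (simp_all add: if_distrib[of "\<lambda>u. u * _"] if_distrib[of "\<lambda>u. _ * u"] sum.delta sum.delta' cong: if_cong)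

definition Emat :: "('n::finite) bmat" where
  "Emat = (\<chi> i j. if i = j then (case i of Inl _ \<Rightarrow> 1 | Inr _ \<Rightarrow> -1) else 0)"

lemma Jmat_entries:
  "Jmat $ Inl a $ Inl b = 0" "Jmat $ Inl a $ Inr b = (if a = b then 1 else 0)"
  "Jmat $ Inr a $ Inl b = (if a = b then -1 else 0)" "Jmat $ Inr a $ Inr b = 0"
  by (simp_all add: Jmat_def)

lemma Emat_entries:
  "Emat $ Inl a $ Inl b = (if a = b then 1 else 0)" "Emat $ Inl a $ Inr b = 0"
  "Emat $ Inr a $ Inl b = 0" "Emat $ Inr a $ Inr b = (if a = b then -1 else 0)"
  by (simp_all add: Emat_def)

lemma mat1_entries:
  "(mat 1 :: 'n::finite bmat) $ Inl a $ Inl b = (if a = b then 1 else 0)" "(mat 1 :: 'n::finite bmat) $ Inl a $ Inr b = 0"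
  "(mat 1 :: 'n::finite bmat) $ Inr a $ Inl b = 0" "(mat 1 :: 'n::finite bmat) $ Inr a $ Inr b = (if a = b then 1 else 0)"
  by (simp_all add: mat_def)

lemma mult_entry: "((A::'a::comm_semiring_1^('n::finite+'n)^'m) ** B) $ i $ j = (\<Sum>a\<in>UNIV. A $ i $ Inl a * B $ Inl a $ j) + (\<Sum>a\<in>UNIV. A $ i $ Inr a * B $ Inr a $ j)"
  by (simp add: matrix_matrix_mult_def sum_UNIV_Plus)

lemma bmat_eqI:
  fixes A B :: "'a^('n::finite+'n)^('n+'n)"
  assumes "\<And>a b. A $ Inl a $ Inl b = B $ Inl a $ Inl b" "\<And>a b. A $ Inl a $ Inr b = B $ Inl a $ Inr b"
    "\<And>a b. A $ Inr a $ Inl b = B $ Inr a $ Inl b" "\<And>a b. A $ Inr a $ Inr b = B $ Inr a $ Inr b"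
  shows "A = B"
  unfolding vec_eq_iff by (metis assms sum.exhaust)

lemma EE: "Emat ** Emat = (mat 1 :: 'n::finite bmat)"
  by (rule bmat_eqI) (simp_all add: sum_negf mult_entry Emat_entries mat1_entries )

lemma JJ: "Jmat ** Jmat = - (mat 1 :: 'n::finite bmat)"
  by (rule bmat_eqI) (simp_all add: sum_negf mult_entry Jmat_entries mat1_entries )

lemma EJE: "Emat ** Jmat ** Emat = - (Jmat :: 'n::finite bmat)"
  by (rule bmat_eqI) (simp_all add: sum_negf mult_entry Jmat_entries Emat_entries )

lemma transpose_E: "transpose Emat = (Emat :: 'n::finite bmat)"
  by (rule bmat_eqI) (simp_all add: transpose_def Emat_entries)

lemma transpose_J: "transpose Jmat = - (Jmat :: 'n::finite bmat)"
  by (rule bmat_eqI) (simp_all add: transpose_def Jmat_entries)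

lemma tau_mat_E: "tau_mat g = Emat ** g ** Emat"
  by (rule bmat_eqI) (simp_all add: sum_negf tau_mat_def mult_entry Emat_entries )

lemma mat_neg_mult: "(- A) ** B = - (A ** (B::'a::ring_1^'p^'n))" "A ** (- B) = - (A ** B)"
  by (simp_all add: vec_eq_iff matrix_matrix_mult_def sum_negf)

lemma mat_add_rdistrib: "(A + B) ** C = A ** C + B ** (C::'a::ring_1^'p^'n)"
  by (simp add: vec_eq_iff matrix_matrix_mult_def sum.distrib algebra_simps)

lemma mat_diff_mult: "(A - B) ** C = A ** C - B ** (C::'a::ring_1^'p^'n)" "C ** (A - B) = C ** A - C ** B"
  by (simp_all add: vec_eq_iff matrix_matrix_mult_def sum_subtractf algebra_simps)

lemma matrix_inv_unique:
  fixes A B :: "'a::field^'n^'n"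
  assumes "B ** A = mat 1"
  shows "matrix_inv A = B" "invertible A" "A ** matrix_inv A = mat 1" "matrix_inv A ** A = mat 1"
proof -
  have AB: "A ** B = mat 1" using assms matrix_left_right_inverse by blast
  have ex: "\<exists>A'. A ** A' = mat 1 \<and> A' ** A = mat 1" using AB assms by blast
  have s: "A ** matrix_inv A = mat 1 \<and> matrix_inv A ** A = mat 1"
    unfolding matrix_inv_def by (rule someI_ex[OF ex])
  then show "A ** matrix_inv A = mat 1" "matrix_inv A ** A = mat 1" by auto
  show "invertible A" using ex invertible_def by blast
  have "matrix_inv A = (B ** A) ** matrix_inv A" using assms by simp
  also have "\<dots> = B ** (A ** matrix_inv A)" by (simp add: matrix_mul_assoc)
  finally show "matrix_inv A = B" using s by simp
qed

lemma matrix_inv_props: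
  fixes A :: "'a::field^'n^'n"
  assumes "invertible A"
  shows "A ** matrix_inv A = mat 1" "matrix_inv A ** A = mat 1"
  using assms matrix_inv_unique invertible_def by metis+

definition Jinv :: "('n::finite) bmat \<Rightarrow> 'n bmat" where
  "Jinv g = - (Jmat ** transpose g ** Jmat)"

lemma Sp_D: "g \<in> Sp \<Longrightarrow> transpose g ** Jmat ** g = Jmat" by (simp add: Sp_def)

lemma Sp_mult: "g \<in> Sp \<Longrightarrow> h \<in> Sp \<Longrightarrow> g ** h \<in> Sp"
  unfolding Sp_def
  by (simp add: matrix_transpose_mul matrix_mul_assoc)
     (metis matrix_mul_assoc)

lemma Sp_one: "mat 1 \<in> Sp" by (simp add: Sp_def)

lemma Sp_left_inv: "g \<in> Sp \<Longrightarrow> Jinv g ** g = mat 1"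
  unfolding Jinv_def
  by (simp add: mat_neg_mult Sp_def flip: matrix_mul_assoc) (simp add: matrix_mul_assoc JJ)

lemma Sp_inv:
  assumes "g \<in> Sp"
  shows "matrix_inv g = Jinv g" "invertible g" "g ** matrix_inv g = mat 1" "matrix_inv g ** g = mat 1"
  using matrix_inv_unique[OF Sp_left_inv[OF assms]] by auto

lemma Sp_matrix_inv: assumes "g \<in> Sp" shows "matrix_inv g \<in> Sp"
proof -
  let ?h = "matrix_inv g"
  have "transpose ?h ** Jmat ** ?h = transpose ?h ** (transpose g ** Jmat ** g) ** ?h"
    using assms by (simp add: Sp_def)
  also have "\<dots> = transpose (g ** ?h) ** Jmat ** (g ** ?h)"
    by (simp add: matrix_transpose_mul matrix_mul_assoc)
  also have "\<dots> = Jmat" using Sp_inv[OF assms] by simp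
  finally show ?thesis by (simp add: Sp_def)
qed

lemma Sp_tau: assumes "g \<in> Sp" shows "tau_mat g \<in> Sp"
proof -
  have "transpose (tau_mat g) ** Jmat ** tau_mat g = Emat ** transpose g ** (Emat ** Jmat ** Emat) ** g ** Emat"
    by (simp add: tau_mat_E matrix_transpose_mul transpose_E matrix_mul_assoc)
  also have "\<dots> = - (Emat ** (transpose g ** Jmat ** g) ** Emat)"
    by (simp add: EJE mat_neg_mult matrix_mul_assoc)
  also have "\<dots> = Jmat" using assms by (simp add: Sp_def EJE)
  finally show ?thesis by (simp add: Sp_def)
qed

lemma Ints_mult_entry:
  assumes "\<forall>i j. A $ i $ j \<in> \<int>" "\<forall>i j. B $ i $ j \<in> \<int>"
  shows "\<forall>i j. (A ** (B::real^'p^'m)) $ i $ j \<in> \<int>"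
  using assms by (auto simp: matrix_matrix_mult_def intro!: Ints_sum Ints_mult)

lemma SpZ_mult: "g \<in> SpZ \<Longrightarrow> h \<in> SpZ \<Longrightarrow> g ** h \<in> SpZ"
  unfolding SpZ_def using Sp_mult Ints_mult_entry by blast

lemma SpZ_tau: "g \<in> SpZ \<Longrightarrow> tau_mat g \<in> SpZ"
  unfolding SpZ_def using Sp_tau
  by (auto simp: tau_mat_def split: sum.splits)

definition cconj :: "complex^'a^'b \<Rightarrow> complex^'a^'b" where
  "cconj M = (\<chi> i j. cnj (M $ i $ j))"
definition cT :: "complex^'a^'b \<Rightarrow> complex^'b^'a" where
  "cT M = (\<chi> i j. cnj (M $ j $ i))"
definition stk2 :: "complex^'c^('n::finite) \<Rightarrow> complex^'c^'n \<Rightarrow> complex^'c^('n+'n)" where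
  "stk2 T R = (\<chi> r c. case r of Inl i \<Rightarrow> T $ i $ c | Inr i \<Rightarrow> R $ i $ c)"
definition stk :: "complex^('n::finite)^'n \<Rightarrow> complex^'n^('n+'n)" where
  "stk X = stk2 X (mat 1)"
definition rel :: "('n::finite) bmat \<Rightarrow> complex^'n^'n \<Rightarrow> complex^'n^'n \<Rightarrow> complex^'n^'n \<Rightarrow> bool" where
  "rel g X W Q \<longleftrightarrow> cmat g ** stk X = stk2 (W ** Q) Q \<and> invertible Q"

lemma cmat_mult: "cmat (A ** B) = cmat A ** cmat (B::real^'p^'m)"
  by (simp add: vec_eq_iff cmat_def matrix_matrix_mult_def)
lemma cmat_transpose: "cmat (transpose A) = transpose (cmat A)"
  by (simp add: vec_eq_iff cmat_def transpose_def)
lemma cmat_one: "cmat (mat 1) = mat 1"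
  by (simp add: vec_eq_iff cmat_def mat_def)
lemma cmat_neg: "cmat (- A) = - cmat A"
  by (simp add: vec_eq_iff cmat_def)
lemma cmat_add: "cmat (A + B) = cmat A + cmat B"
  by (simp add: vec_eq_iff cmat_def)
lemma cmat_diff: "cmat (A - B) = cmat A - cmat B"
  by (simp add: vec_eq_iff cmat_def)

lemma cconj_mult: "cconj (A ** B) = cconj A ** cconj (B::complex^'p^'m)"
  by (simp add: vec_eq_iff cconj_def matrix_matrix_mult_def)
lemma cconj_cmat: "cconj (cmat A) = cmat A"
  by (simp add: vec_eq_iff cconj_def cmat_def)
lemma cconj_cconj: "cconj (cconj A) = A"
  by (simp add: vec_eq_iff cconj_def)
lemma cconj_neg: "cconj (- A) = - cconj A"
  by (simp add: vec_eq_iff cconj_def)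
lemma cconj_one: "cconj (mat 1) = mat 1"
  by (simp add: vec_eq_iff cconj_def mat_def)

lemma cT_mult: "cT (A ** B) = cT B ** cT (A::complex^'p^'m)"
  by (simp add: vec_eq_iff cT_def matrix_matrix_mult_def mult.commute)
lemma cT_cmat: "cT (cmat A) = cmat (transpose A)"
  by (simp add: vec_eq_iff cT_def cmat_def transpose_def)
lemma cT_cT: "cT (cT A) = A"
  by (simp add: vec_eq_iff cT_def)
lemma cT_diff: "cT (A - B) = cT A - cT B"
  by (simp add: vec_eq_iff cT_def)

lemma stk2_mult: "stk2 T R ** Q = stk2 (T ** Q) (R ** Q)"
  by (simp add: vec_eq_iff stk2_def matrix_matrix_mult_def split: sum.splits)

lemma stk2_eq: "stk2 T R = stk2 T' R' \<longleftrightarrow> T = T' \<and> R = R'"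
proof
  assume h: "stk2 T R = stk2 T' R'"
  have "\<And>i c. T $ i $ c = T' $ i $ c" "\<And>i c. R $ i $ c = R' $ i $ c"
    using h by (metis (no_types, lifting) stk2_def sum.case vec_lambda_beta)+
  then show "T = T' \<and> R = R'" by (simp add: vec_eq_iff)
qed simp

lemma blk_stk2:
  "cmat g ** stk2 T R = stk2 (cmat (blkA g) ** T + cmat (blkB g) ** R) (cmat (blkC g) ** T + cmat (blkD g) ** R)"
proof -
  have "\<And>r c. (cmat g ** stk2 T R) $ r $ c = stk2 (cmat (blkA g) ** T + cmat (blkB g) ** R) (cmat (blkC g) ** T + cmat (blkD g) ** R) $ r $ c"
    subgoal for r c
      by (cases r) (simp_all add: stk2_def cmat_def matrix_matrix_mult_def sum_UNIV_Plus blkA_def blkB_def blkC_def blkD_def)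
    done
  then show ?thesis by (simp add: vec_eq_iff)
qed

lemma rel_blocks: "rel g X W Q \<longleftrightarrow> cmat (blkA g) ** X + cmat (blkB g) = W ** Q \<and> cmat (blkC g) ** X + cmat (blkD g) = Q \<and> invertible Q"
  unfolding rel_def stk_def blk_stk2 stk2_eq by simp

lemma rel_act: "rel g X W Q \<Longrightarrow> sp_act g X = W"
  unfolding rel_blocks sp_act_def
  by (metis matrix_inv_props(1) matrix_mul_assoc matrix_mul_rid)

lemma act_rel: "invertible (cmat (blkC g) ** X + cmat (blkD g)) \<Longrightarrow> rel g X (sp_act g X) (cmat (blkC g) ** X + cmat (blkD g))"
  unfolding rel_blocks sp_act_def
  by (simp add: matrix_inv_props(2) flip: matrix_mul_assoc)

lemma rel_unique: "rel g X W Q \<Longrightarrow> rel g X W' Q' \<Longrightarrow> W = W' \<and> Q = Q'"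
  using rel_act by (metis rel_blocks)

lemma rel_comp: "rel g X W Q1 \<Longrightarrow> rel g' W V Q2 \<Longrightarrow> rel (g' ** g) X V (Q2 ** Q1)"
  unfolding rel_def
  by (simp add: invertible_mult cmat_mult stk2_mult stk_def flip: matrix_mul_assoc)
     (metis stk2_mult matrix_mul_lid matrix_mul_assoc)

lemma rel_id: "rel (mat 1) X V Q \<Longrightarrow> V = X"
  unfolding rel_def stk_def cmat_one matrix_mul_lid stk2_eq by (metis matrix_mul_lid matrix_mul_rid)

lemma cmat_tau: "cmat (tau_mat g) = cmat Emat ** cmat g ** cmat Emat"
  by (simp add: tau_mat_E cmat_mult)

lemma cE_cE: "cmat (Emat::'n::finite bmat) ** cmat Emat = mat 1"
  by (simp flip: cmat_mult add: EE cmat_one)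

lemma of_real_if: "complex_of_real (if P then a else b) = (if P then complex_of_real a else complex_of_real b)"
  by simp
lemma cnj_if: "cnj (if P then a else b) = (if P then cnj a else cnj b)"
  by simp

lemma stk_tau: "stk (tau_pt X) = - (cmat Emat ** cconj (stk X))"
proof -
  have "\<And>r c. stk (tau_pt X) $ r $ c = (- (cmat Emat ** cconj (stk X))) $ r $ c"
    subgoal for r c
      by (cases r) (simp_all add: mult_entry stk_def stk2_def cmat_def Emat_entries cconj_def tau_pt_def mat_def of_real_if cnj_if cong: if_cong)
    done
  then show ?thesis by (simp add: vec_eq_iff)
qed

lemma invertible_cconj: "invertible Q \<Longrightarrow> invertible (cconj Q)"
  unfolding invertible_def by (metis cconj_mult cconj_one)

lemma rel_tau: assumes "rel g X W Q" shows "rel (tau_mat g) (tau_pt X) (tau_pt W) (cconj Q)"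
proof -
  have e: "cmat g ** stk X = stk W ** Q" "invertible Q" using assms
    by (simp_all add: rel_def stk_def stk2_mult)
  have "cmat (tau_mat g) ** stk (tau_pt X) = - (cmat Emat ** cmat g ** (cmat Emat ** cmat Emat) ** cconj (stk X))"
    by (simp add: cmat_tau stk_tau mat_neg_mult matrix_mul_assoc)
  also have "\<dots> = - (cmat Emat ** cconj (cmat g ** stk X))"
    by (simp add: cE_cE cconj_mult cconj_cmat matrix_mul_assoc)
  also have "\<dots> = stk (tau_pt W) ** cconj Q"
    by (simp add: e cconj_mult stk_tau mat_neg_mult matrix_mul_assoc)
  finally show ?thesis using e by (simp add: rel_def stk_def stk2_mult invertible_cconj)
qed

definition herm :: "complex^'k \<Rightarrow> complex^'k \<Rightarrow> complex" where
  "herm u w = (\<Sum>i\<in>UNIV. cnj (u $ i) * w $ i)"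

lemma herm_mult: "herm u (A *v w) = herm (cT A *v u) w"
  by (simp add: herm_def cT_def matrix_vector_mult_def sum_distrib_left sum_distrib_right mult_ac)
     (rule sum.swap)

lemma herm_prod: "herm v ((cT A ** B) *v v) = herm (A *v v) (B *v v)"
  by (simp add: herm_mult cT_cT flip: matrix_vector_mul_assoc)

lemma herm_diff: "herm v ((A - B) *v v) = herm v (A *v v) - herm v (B *v v)"
  by (simp add: herm_def matrix_vector_mult_diff_rdistrib algebra_simps sum_subtractf)

lemma herm_zero: "herm 0 w = 0" "herm w 0 = 0"
  by (simp_all add: herm_def)

lemma cmatJ_entries:
  "cmat Jmat $ Inl a $ Inl b = 0" "cmat Jmat $ Inl a $ Inr b = (if a = b then 1 else 0)"
  "cmat Jmat $ Inr a $ Inl b = (if a = b then -1 else 0)" "cmat Jmat $ Inr a $ Inr b = 0"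
  by (simp_all add: cmat_def Jmat_entries)

lemma J_stk2: "cmat Jmat ** stk2 T R = stk2 R (- T)"
proof -
  have "\<And>r c. (cmat Jmat ** stk2 T R) $ r $ c = stk2 R (- T) $ r $ c"
    subgoal for r c
      by (cases r) (simp_all add: mult_entry stk2_def cmatJ_entries sum_negf)
    done
  then show ?thesis by (simp add: vec_eq_iff)
qed

lemma cT_stk2_mult: "cT (stk2 T R) ** stk2 T' R' = cT T ** T' + cT R ** R'"
  by (simp add: vec_eq_iff matrix_matrix_mult_def sum_UNIV_Plus cT_def stk2_def)

lemma tr_stk2_mult: "transpose (stk2 T R) ** stk2 T' R' = transpose T ** T' + transpose R ** R'"
  by (simp add: vec_eq_iff matrix_matrix_mult_def sum_UNIV_Plus transpose_def stk2_def)

lemma cT_one: "cT (mat 1) = mat 1"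
  by (simp add: vec_eq_iff cT_def mat_def)

lemma form_G: "cT (stk2 T R) ** cmat Jmat ** stk2 T R = cT T ** R - cT R ** T"
  by (simp add: J_stk2 cT_stk2_mult mat_neg_mult flip: matrix_mul_assoc)

lemma form_F: "transpose (stk2 T R) ** cmat Jmat ** stk2 T R = transpose T ** R - transpose R ** T"
  by (simp add: J_stk2 tr_stk2_mult mat_neg_mult flip: matrix_mul_assoc)

lemma form_G_inv: assumes "g \<in> Sp"
  shows "cT (cmat g ** M) ** cmat Jmat ** (cmat g ** M) = cT M ** cmat Jmat ** M"
proof -
  have "cT (cmat g ** M) ** cmat Jmat ** (cmat g ** M) = cT M ** cmat (transpose g ** Jmat ** g) ** M"
    by (simp add: cT_mult cT_cmat cmat_mult matrix_mul_assoc)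
  then show ?thesis using assms by (simp add: Sp_def)
qed

lemma form_F_inv: assumes "g \<in> Sp"
  shows "transpose (cmat g ** M) ** cmat Jmat ** (cmat g ** M) = transpose M ** cmat Jmat ** M"
proof -
  have "transpose (cmat g ** M) ** cmat Jmat ** (cmat g ** M) = transpose M ** cmat (transpose g ** Jmat ** g) ** M"
    by (simp add: matrix_transpose_mul cmat_transpose cmat_mult matrix_mul_assoc)
  then show ?thesis using assms by (simp add: Sp_def)
qed

lemma cT_minus_sym: assumes "transpose W = W"
  shows "cT W - W = (\<chi> i j. (-2*\<i>) * cmat (ImM W) $ i $ j)"
proof -
  have s: "W $ j $ i = W $ i $ j" for i j using assms by (metis transpose_def vec_lambda_beta)
  show ?thesis
    by (simp add: vec_eq_iff cT_def cmat_def ImM_def s complex_eq_iff)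
qed

lemma herm_sym: assumes "transpose W = W"
  shows "herm u ((cT W - W) *v u) = (-2*\<i>) * herm u (cmat (ImM W) *v u)"
  unfolding cT_minus_sym[OF assms]
  by (simp add: herm_def matrix_vector_mult_def sum_distrib_left mult_ac)

definition cvec :: "real^'k \<Rightarrow> complex^'k" where
  "cvec x = (\<chi> i. complex_of_real (x $ i))"

lemma herm_real: "herm (cvec x) (cmat Y *v cvec x) = complex_of_real (x \<bullet> (Y *v x))"
  by (simp add: herm_def cvec_def cmat_def matrix_vector_mult_def inner_vec_def)

lemma posdef_herm:
  assumes "Y \<in> posdef_cone" "v \<noteq> 0"
  shows "Re (herm v (cmat Y *v v)) > 0"
proof -
  define a where "a = (\<chi> i. Re (v $ i))"
  define b where "b = (\<chi> i. Im (v $ i))"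
  have "Re (herm v (cmat Y *v v)) = (\<Sum>i\<in>UNIV. \<Sum>j\<in>UNIV. Y $ i $ j * (a $ i * a $ j + b $ i * b $ j))"
    by (simp add: herm_def cmat_def matrix_vector_mult_def a_def b_def sum_distrib_left algebra_simps)
  also have "\<dots> = a \<bullet> (Y *v a) + b \<bullet> (Y *v b)"
    by (simp add: inner_vec_def matrix_vector_mult_def sum_distrib_left algebra_simps sum.distrib)
  finally have e: "Re (herm v (cmat Y *v v)) = a \<bullet> (Y *v a) + b \<bullet> (Y *v b)" .
  have pa: "x = 0 \<or> x \<bullet> (Y *v x) > 0" for x using assms(1) by (auto simp: posdef_cone_def)
  have "a \<noteq> 0 \<or> b \<noteq> 0"
    using assms(2) by (auto simp: a_def b_def vec_eq_iff complex_eq_iff)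
  then show ?thesis unfolding e using pa[of a] pa[of b] by auto
qed

lemma invertible_of_ker:
  fixes Q :: "complex^'n::finite^'n"
  assumes "\<And>v. Q *v v = 0 \<Longrightarrow> v = 0"
  shows "invertible Q"
  using assms matrix_left_invertible_ker invertible_left_inverse by blast

lemma mat_zero_mult: "0 ** A = (0::complex^'p^'m)" "B ** 0 = (0::complex^'p^'m)"
  by (simp_all add: vec_eq_iff matrix_matrix_mult_def)

lemma siegel_act:
  assumes g: "g \<in> Sp" and X: "X \<in> siegel"
  defines "Q \<equiv> cmat (blkC g) ** X + cmat (blkD g)"
  shows "invertible Q" "rel g X (sp_act g X) Q" "sp_act g X \<in> siegel"
proof -
  define T where "T = cmat (blkA g) ** X + cmat (blkB g)"
  have M: "cmat g ** stk X = stk2 T Q" unfolding stk_def blk_stk2 T_def Q_def by simp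
  have Xs: "transpose X = X" and Xp: "ImM X \<in> posdef_cone" using X by (auto simp: siegel_def)
  have G: "cT T ** Q - cT Q ** T = cT X - X"
    using form_G_inv[OF g, of "stk X"] unfolding M form_G by (simp add: stk_def form_G cT_one)
  have F: "transpose T ** Q - transpose Q ** T = 0"
    using form_F_inv[OF g, of "stk X"] unfolding M form_F by (simp add: stk_def form_F Xs)
  show inv: "invertible Q"
  proof (rule invertible_of_ker)
    fix v assume Qv: "Q *v v = 0"
    have "herm v ((cT X - X) *v v) = herm v ((cT T ** Q - cT Q ** T) *v v)" using G by simp
    also have "\<dots> = 0" by (simp add: herm_diff herm_prod Qv herm_zero)
    finally have h0: "herm v (cmat (ImM X) *v v) = 0" using herm_sym[OF Xs] by simp
    show "v = 0"
    proof (rule ccontr)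
      assume "v \<noteq> 0"
      then have "Re (herm v (cmat (ImM X) *v v)) > 0" by (rule posdef_herm[OF Xp])
      with h0 show False by simp
    qed
  qed
  show r: "rel g X (sp_act g X) Q" using act_rel[of g X] inv unfolding Q_def by simp
  define W where "W = sp_act g X"
  obtain Qi where Qi: "Q ** Qi = mat 1" "Qi ** Q = mat 1" using inv invertible_def by blast
  have TW: "T = W ** Q" using r M by (simp add: rel_def W_def stk2_eq)
  have h0: "transpose Q ** (transpose W - W) ** Q = 0"
    using F by (simp add: TW matrix_transpose_mul mat_diff_mult matrix_mul_assoc)
  have tQ: "transpose Qi ** transpose Q = mat 1"
  proof -
    have "transpose Qi ** transpose Q = transpose (Q ** Qi)" by (simp only: matrix_transpose_mul)
    also have "\<dots> = mat 1" by (simp add: Qi)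
    finally show ?thesis .
  qed
  have "transpose W - W = (transpose Qi ** transpose Q) ** (transpose W - W) ** (Q ** Qi)"
    by (simp add: tQ Qi)
  also have "\<dots> = transpose Qi ** (transpose Q ** (transpose W - W) ** Q) ** Qi"
    by (simp only: matrix_mul_assoc)
  also have "\<dots> = 0" by (simp only: h0 mat_zero_mult)
  finally have Ws: "transpose W = W" by simp
  have GW: "cT Q ** ((cT W - W) ** Q) = cT X - X"
    using G by (simp add: TW cT_mult mat_diff_mult matrix_mul_assoc)
  have pos: "x \<bullet> (ImM W *v x) > 0" if "x \<noteq> 0" for x
  proof -
    define v where "v = Qi *v cvec x"
    have Qv: "Q *v v = cvec x" by (simp add: v_def matrix_vector_mul_assoc Qi)
    have "cvec x \<noteq> 0" using that by (auto simp: cvec_def vec_eq_iff)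
    then have "v \<noteq> 0" using Qv by (metis matrix_vector_mult_0_right)
    then have p: "Re (herm v (cmat (ImM X) *v v)) > 0" using posdef_herm[OF Xp] by blast
    have "(-2*\<i>) * herm v (cmat (ImM X) *v v) = herm v ((cT X - X) *v v)" using herm_sym[OF Xs] by simp
    also have "\<dots> = herm (cvec x) ((cT W - W) *v cvec x)"
    proof -
      have "herm v ((cT X - X) *v v) = herm v ((cT Q ** ((cT W - W) ** Q)) *v v)" by (simp only: GW)
      also have "\<dots> = herm (Q *v v) (((cT W - W) ** Q) *v v)" by (rule herm_prod)
      also have "\<dots> = herm (Q *v v) ((cT W - W) *v (Q *v v))" by (simp only: matrix_vector_mul_assoc[symmetric])
      finally show ?thesis by (simp only: Qv)
    qed
    also have "\<dots> = (-2*\<i>) * complex_of_real (x \<bullet> (ImM W *v x))"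
      using herm_sym[OF Ws] herm_real by simp
    finally have "herm v (cmat (ImM X) *v v) = complex_of_real (x \<bullet> (ImM W *v x))" by simp
    then show ?thesis using p by simp
  qed
  have Wsym: "W $ j $ i = W $ i $ j" for i j using Ws by (metis transpose_def vec_lambda_beta)
  have "transpose (ImM W) = ImM W" by (simp add: vec_eq_iff transpose_def ImM_def Wsym)
  then show "sp_act g X \<in> siegel" using Ws pos by (simp add: siegel_def posdef_cone_def W_def[symmetric])
qed

lemma tau_pt_tau_pt: "tau_pt (tau_pt X) = X"
  by (simp add: tau_pt_def vec_eq_iff)

lemma siegel_tau: assumes "X \<in> siegel" shows "tau_pt X \<in> siegel"
proof -
  have "transpose X = X" "ImM X \<in> posdef_cone" using assms by (auto simp: siegel_def)
  moreover have "transpose (tau_pt X) = tau_pt (transpose X)" by (simp add: vec_eq_iff transpose_def tau_pt_def)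
  moreover have "ImM (tau_pt X) = ImM X" by (simp add: vec_eq_iff ImM_def tau_pt_def)
  ultimately show ?thesis by (simp add: siegel_def)
qed

lemma rel_inj:
  assumes g: "g \<in> Sp" and r1: "rel g X V Q" and r2: "rel g X' V Q'" and V: "V \<in> siegel"
  shows "X = X'"
proof -
  have gi: "matrix_inv g \<in> Sp" using Sp_matrix_inv[OF g] .
  obtain R where R: "rel (matrix_inv g) V (sp_act (matrix_inv g) V) R" using siegel_act(2)[OF gi V] by blast
  have "rel (matrix_inv g ** g) X (sp_act (matrix_inv g) V) (R ** Q)" using rel_comp[OF r1 R] .
  then have "sp_act (matrix_inv g) V = X" using Sp_inv[OF g] rel_id by simp
  moreover have "rel (matrix_inv g ** g) X' (sp_act (matrix_inv g) V) (R ** Q')" using rel_comp[OF r2 R] .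
  then have "sp_act (matrix_inv g) V = X'" using Sp_inv[OF g] rel_id by simp
  ultimately show ?thesis by simp
qed

lemma tau_gamma_fix:
  assumes g: "\<gamma> \<in> SpZ" and Z: "Z \<in> siegel"
    and stab: "\<forall>g \<in> SpZ. sp_act g Z = Z \<longrightarrow> g = mat 1 \<or> g = - mat 1"
    and t: "tau_pt Z = sp_act \<gamma> Z"
  shows "tau_mat \<gamma> ** \<gamma> = mat 1 \<or> tau_mat \<gamma> ** \<gamma> = - mat 1"
proof -
  have gS: "\<gamma> \<in> Sp" using g by (simp add: SpZ_def)
  obtain Q where r: "rel \<gamma> Z (tau_pt Z) Q" using siegel_act(2)[OF gS Z] t by metis
  have "rel (tau_mat \<gamma>) (tau_pt Z) Z (cconj Q)" using rel_tau[OF r] tau_pt_tau_pt by metis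
  from rel_comp[OF r this] have "sp_act (tau_mat \<gamma> ** \<gamma>) Z = Z" by (rule rel_act)
  moreover have "tau_mat \<gamma> ** \<gamma> \<in> SpZ" using SpZ_mult SpZ_tau g by blast
  ultimately show ?thesis using stab by blast
qed

lemma Gamma2_K:
  assumes "\<gamma> \<in> Gamma2"
  obtains K where "\<And>i j. \<gamma> $ i $ j = mat 1 $ i $ j + 2 * of_int (K i j)"
proof -
  have "\<forall>i j. \<exists>k::int. \<gamma> $ i $ j - mat 1 $ i $ j = 2 * of_int k" using assms by (simp add: Gamma2_def)
  then obtain K where "\<And>i j. \<gamma> $ i $ j - mat 1 $ i $ j = 2 * of_int (K i j)" by metis
  then show ?thesis using that by (metis diff_add_cancel add.commute)
qed

lemma Gamma2_not_neg:
  assumes "\<gamma> \<in> Gamma2"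
  shows "tau_mat \<gamma> ** \<gamma> \<noteq> - mat 1"
proof
  obtain K where K: "\<And>i j. \<gamma> $ i $ j = mat 1 $ i $ j + 2 * of_int (K i j)" using Gamma2_K[OF assms] by blast
  fix a :: 'a
  assume h: "tau_mat \<gamma> ** \<gamma> = - mat 1"
  have Kd: "\<gamma> $ Inl a $ Inl a = 1 + 2 * of_int (K (Inl a) (Inl a))" using K[of "Inl a" "Inl a"] by (simp add: mat_def)
  have Ko: "\<gamma> $ Inl a $ Inl b = 2 * of_int (K (Inl a) (Inl b))" "\<gamma> $ Inl b $ Inl a = 2 * of_int (K (Inl b) (Inl a))"
    if "b \<noteq> a" for b using K[of "Inl a" "Inl b"] K[of "Inl b" "Inl a"] that by (auto simp: mat_def)
  have Kr: "\<gamma> $ Inl a $ Inr b = 2 * of_int (K (Inl a) (Inr b))" "\<gamma> $ Inr b $ Inl a = 2 * of_int (K (Inr b) (Inl a))"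
    for b using K[of "Inl a" "Inr b"] K[of "Inr b" "Inl a"] by (auto simp: mat_def)
  define M where "M = K (Inl a) (Inl a) + K (Inl a) (Inl a) * K (Inl a) (Inl a)
     + (\<Sum>b\<in>UNIV-{a}. K (Inl a) (Inl b) * K (Inl b) (Inl a)) - (\<Sum>b\<in>UNIV. K (Inl a) (Inr b) * K (Inr b) (Inl a))"
  have "(tau_mat \<gamma> ** \<gamma>) $ Inl a $ Inl a = (\<Sum>b\<in>UNIV. \<gamma> $ Inl a $ Inl b * \<gamma> $ Inl b $ Inl a)
      - (\<Sum>b\<in>UNIV. \<gamma> $ Inl a $ Inr b * \<gamma> $ Inr b $ Inl a)"
    by (simp add: mult_entry tau_mat_def sum_negf)
  also have "\<dots> = \<gamma> $ Inl a $ Inl a * \<gamma> $ Inl a $ Inl a + (\<Sum>b\<in>UNIV-{a}. \<gamma> $ Inl a $ Inl b * \<gamma> $ Inl b $ Inl a)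
      - (\<Sum>b\<in>UNIV. \<gamma> $ Inl a $ Inr b * \<gamma> $ Inr b $ Inl a)"
    by (simp add: sum.remove)
  also have "(\<Sum>b\<in>UNIV-{a}. \<gamma> $ Inl a $ Inl b * \<gamma> $ Inl b $ Inl a) = (\<Sum>b\<in>UNIV-{a}. 4 * of_int (K (Inl a) (Inl b) * K (Inl b) (Inl a)))"
    by (rule sum.cong) (auto simp: Ko)
  also have "(\<Sum>b\<in>UNIV. \<gamma> $ Inl a $ Inr b * \<gamma> $ Inr b $ Inl a) = (\<Sum>b\<in>UNIV. 4 * of_int (K (Inl a) (Inr b) * K (Inr b) (Inl a)))"
    by (rule sum.cong) (auto simp: Kr)
  finally have "(tau_mat \<gamma> ** \<gamma>) $ Inl a $ Inl a = of_int (1 + 4 * M)"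
    by (simp add: Kd M_def sum_distrib_left algebra_simps)
  with h have "of_int (1 + 4 * M) = (-1::real)" by (simp add: mat_def)
  then have "1 + 4 * M = -1" by linarith
  then show False by presburger
qed

lemma fixset_eq:
  assumes h: "h \<in> Sp" and gam: "\<gamma> = tau_mat h ** matrix_inv h"
  shows "fixset \<gamma> = sp_act h ` iCn"
proof
  have hi: "matrix_inv h \<in> Sp" using Sp_matrix_inv[OF h] .
  have th: "tau_mat h \<in> Sp" using Sp_tau[OF h] .
  have gS: "\<gamma> \<in> Sp" using gam Sp_mult th hi by simp
  show "fixset \<gamma> \<subseteq> sp_act h ` iCn"
  proof
    fix Z' assume "Z' \<in> fixset \<gamma>"
    then have Z': "Z' \<in> siegel" and fx: "sp_act \<gamma> Z' = tau_pt Z'" by (auto simp: fixset_def)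
    define W where "W = sp_act (matrix_inv h) Z'"
    obtain Q1 where r1: "rel (matrix_inv h) Z' W Q1" using siegel_act(2)[OF hi Z'] W_def by blast
    have Ws: "W \<in> siegel" using siegel_act(3)[OF hi Z'] W_def by simp
    obtain Q2 where r2: "rel h W (sp_act h W) Q2" using siegel_act(2)[OF h Ws] by blast
    have "rel (h ** matrix_inv h) Z' (sp_act h W) (Q2 ** Q1)" using rel_comp[OF r1 r2] .
    then have VZ: "sp_act h W = Z'" using Sp_inv[OF h] rel_id by simp
    with r2 have r2': "rel h W Z' Q2" by simp
    have rt: "rel (tau_mat h) (tau_pt W) (tau_pt Z') (cconj Q2)" using rel_tau[OF r2'] .
    obtain Q3 where r3: "rel (tau_mat h) W (sp_act (tau_mat h) W) Q3" using siegel_act(2)[OF th Ws] by blast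
    have "rel \<gamma> Z' (sp_act (tau_mat h) W) (Q3 ** Q1)" using rel_comp[OF r1 r3] gam by simp
    then have "sp_act (tau_mat h) W = tau_pt Z'" using rel_act fx by metis
    with r3 have r3': "rel (tau_mat h) W (tau_pt Z') Q3" by simp
    have tW: "tau_pt W = W" using rel_inj[OF th rt r3' siegel_tau[OF Z']] .
    define Y where "Y = ImM W"
    have Yp: "Y \<in> posdef_cone" using Ws by (simp add: siegel_def Y_def)
    have "W = (\<chi> i j. \<i> * complex_of_real (Y $ i $ j))"
    proof -
      have "W $ i $ j = \<i> * complex_of_real (Y $ i $ j)" for i j
      proof -
        have "- cnj (W $ i $ j) = W $ i $ j" using tW by (metis tau_pt_def vec_lambda_beta)
        then show ?thesis by (simp add: Y_def ImM_def complex_eq_iff)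
      qed
      then show ?thesis by (simp add: vec_eq_iff)
    qed
    then have "W \<in> iCn" using Yp by (simp add: iCn_def)
    then show "Z' \<in> sp_act h ` iCn" using VZ by blast
  qed
  show "sp_act h ` iCn \<subseteq> fixset \<gamma>"
  proof
    fix Z' assume "Z' \<in> sp_act h ` iCn"
    then obtain Y where Yp: "Y \<in> posdef_cone" and Z'd: "Z' = sp_act h (\<chi> i j. \<i> * complex_of_real (Y $ i $ j))"
      by (auto simp: iCn_def)
    define X where "X = (\<chi> i j. \<i> * complex_of_real (Y $ i $ j))"
    have Ys: "transpose Y = Y" using Yp by (simp add: posdef_cone_def)
    have "transpose X = X" using Ys by (metis (no_types, lifting) X_def transpose_def vec_lambda_beta vec_lambda_unique)
    moreover have "ImM X = Y" by (simp add: X_def ImM_def vec_eq_iff)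
    ultimately have Xs: "X \<in> siegel" using Yp by (simp add: siegel_def)
    have tX: "tau_pt X = X" by (simp add: X_def tau_pt_def vec_eq_iff)
    obtain Q where r: "rel h X Z' Q" using siegel_act(2)[OF h Xs] Z'd X_def by blast
    have Z's: "Z' \<in> siegel" using siegel_act(3)[OF h Xs] Z'd X_def by simp
    have rt: "rel (tau_mat h) X (tau_pt Z') (cconj Q)" using rel_tau[OF r] tX by simp
    obtain R where rR: "rel (matrix_inv h) Z' (sp_act (matrix_inv h) Z') R" using siegel_act(2)[OF hi Z's] by blast
    have "rel (matrix_inv h ** h) X (sp_act (matrix_inv h) Z') (R ** Q)" using rel_comp[OF r rR] .
    then have "sp_act (matrix_inv h) Z' = X" using Sp_inv[OF h] rel_id by simp
    with rR have rR': "rel (matrix_inv h) Z' X R" by simp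
    have "rel \<gamma> Z' (tau_pt Z') (cconj Q ** R)" using rel_comp[OF rR' rt] gam by simp
    then have "sp_act \<gamma> Z' = tau_pt Z'" by (rule rel_act)
    then show "Z' \<in> fixset \<gamma>" using Z's by (simp add: fixset_def)
  qed
qed

definition intv :: "real^'m \<Rightarrow> bool" where "intv v \<longleftrightarrow> (\<forall>k. v $ k \<in> \<int>)"

definition zmod :: "(real^'m) set \<Rightarrow> bool" where
  "zmod L \<longleftrightarrow> 0 \<in> L \<and> (\<forall>x\<in>L. \<forall>y\<in>L. x + y \<in> L) \<and> (\<forall>x\<in>L. \<forall>c\<in>\<int>. c *\<^sub>R x \<in> L) \<and> (\<forall>x\<in>L. intv x)"

definition zspan :: "(real^'m) set \<Rightarrow> (real^'m) set \<Rightarrow> bool" where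
  "zspan B L \<longleftrightarrow> (\<forall>v\<in>L. \<exists>c. (\<forall>b\<in>B. c b \<in> \<int>) \<and> v = (\<Sum>b\<in>B. c b *\<^sub>R b))"

definition Lsub :: "(real^'m) set \<Rightarrow> 'm set \<Rightarrow> (real^'m) set" where
  "Lsub L S = {v\<in>L. \<forall>k. k \<notin> S \<longrightarrow> v $ k = 0}"

lemma zmod_Lsub: "zmod L \<Longrightarrow> zmod (Lsub L S)"
  by (auto simp: zmod_def Lsub_def)

lemma zmod_diff: "zmod L \<Longrightarrow> x \<in> L \<Longrightarrow> y \<in> L \<Longrightarrow> c \<in> \<int> \<Longrightarrow> x - c *\<^sub>R y \<in> L"
proof -
  assume L: "zmod L" and xy: "x \<in> L" "y \<in> L" and c: "c \<in> \<int>"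
  have "(- c) *\<^sub>R y \<in> L" using L xy c by (metis Ints_minus zmod_def)
  then have "x + (- c) *\<^sub>R y \<in> L" using L xy by (metis zmod_def)
  then show ?thesis by (metis scaleR_minus_left diff_conv_add_uminus)
qed

lemma lattice_basis_aux:
  assumes L: "zmod L" and S: "finite S"
  shows "\<exists>B. finite B \<and> B \<subseteq> Lsub L S \<and> independent B \<and> zspan B (Lsub L S)"
  using S
proof (induction S rule: finite_induct)
  case empty
  have h: "Lsub L {} \<subseteq> {0}" by (auto simp: Lsub_def vec_eq_iff)
  show ?case using h by (intro exI[of _ "{}"]) (auto simp: zspan_def independent_empty)
next
  case (insert a S)
  then obtain B where B: "finite B" "B \<subseteq> Lsub L S" "independent B" "zspan B (Lsub L S)" by blast
  let ?LA = "Lsub L (insert a S)"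
  have LA: "zmod ?LA" using zmod_Lsub[OF L] .
  have sub: "Lsub L S \<subseteq> ?LA" by (auto simp: Lsub_def)
  show ?case
  proof (cases "\<forall>v\<in>?LA. v $ a = 0")
    case True
    then have "?LA = Lsub L S" by (auto simp: Lsub_def)
    then show ?thesis using B by auto
  next
    case False
    then obtain v1 where v1: "v1 \<in> ?LA" "v1 $ a \<noteq> 0" by blast
    have "v1 $ a \<in> \<int>" using v1 LA by (simp add: zmod_def intv_def)
    then obtain z where z: "v1 $ a = of_int z" by (auto elim: Ints_cases)
    define D where "D = {k::nat. k > 0 \<and> (\<exists>v\<in>?LA. v $ a = real k)}"
    have "nat \<bar>z\<bar> \<in> D"
    proof (cases "z > 0")
      case True then show ?thesis using v1 z by (auto simp: D_def intro!: bexI[of _ v1])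
    next
      case False
      then have zn: "z < 0" using v1 z by auto
      have "(-1) *\<^sub>R v1 \<in> ?LA" using LA v1 unfolding zmod_def by (metis Ints_1 Ints_minus)
      then have "- v1 \<in> ?LA" by simp
      then show ?thesis using zn z v1 by (auto simp: D_def intro!: bexI[of _ "- v1"])
    qed
    then have DE: "\<exists>k. k \<in> D" by blast
    define d where "d = (LEAST k. k \<in> D)"
    have dD: "d \<in> D" unfolding d_def by (rule LeastI_ex[OF DE])
    then obtain v0 where v0: "v0 \<in> ?LA" "v0 $ a = real d" and d0: "d > 0" by (auto simp: D_def)
    have min: "\<not> (k \<in> D)" if "k < d" for k using not_less_Least[of k "\<lambda>k. k \<in> D"] that d_def by blast
    have v0B: "v0 \<notin> span B"
    proof
      assume "v0 \<in> span B"
      moreover have "span B \<subseteq> {x. x $ a = 0}"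
      proof (rule span_minimal)
        show "B \<subseteq> {x. x $ a = 0}" using B(2) insert(2) by (auto simp: Lsub_def)
        show "subspace {x::real^'a. x $ a = 0}" by (auto simp: subspace_def)
      qed
      ultimately show False using v0 d0 by auto
    qed
    then have v0nB: "v0 \<notin> B" using span_base by blast
    have red: "\<exists>q\<in>\<int>. w - q *\<^sub>R v0 \<in> Lsub L S" if w: "w \<in> ?LA" for w
    proof -
      have "w $ a \<in> \<int>" using w LA by (simp add: zmod_def intv_def)
      then obtain m where m: "w $ a = of_int m" by (auto elim: Ints_cases)
      define q where "q = m div int d"
      define r where "r = m mod int d"
      have r0: "0 \<le> r" "r < int d" using d0 by (auto simp: r_def)
      have w': "w - of_int q *\<^sub>R v0 \<in> ?LA" using zmod_diff[OF LA w v0(1)] by simp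
      have wa: "(w - of_int q *\<^sub>R v0) $ a = of_int r"
      proof -
        have "m = q * int d + r" by (simp add: q_def r_def)
        then show ?thesis using m v0 by simp
      qed
      have "r = 0"
      proof (rule ccontr)
        assume "r \<noteq> 0"
        then have "nat r \<in> D" using r0 w' wa by (auto simp: D_def intro!: bexI[of _ "w - of_int q *\<^sub>R v0"])
        moreover have "nat r < d" using r0 by auto
        ultimately show False using min by blast
      qed
      then have "w - of_int q *\<^sub>R v0 \<in> Lsub L S" using w' wa
        by (auto simp: Lsub_def)
      then show ?thesis by (intro bexI[of _ "of_int q"]) auto
    qed
    show ?thesis
    proof (intro exI conjI)
      show "finite (insert v0 B)" using B by simp
      show "insert v0 B \<subseteq> ?LA" using B(2) sub v0 by auto
      show "independent (insert v0 B)" using independent_insertI[OF v0B B(3)] .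
      show "zspan (insert v0 B) ?LA"
        unfolding zspan_def
      proof
        fix w assume w: "w \<in> ?LA"
        obtain q where q: "q \<in> \<int>" "w - q *\<^sub>R v0 \<in> Lsub L S" using red[OF w] by blast
        obtain c where c: "\<forall>b\<in>B. c b \<in> \<int>" "w - q *\<^sub>R v0 = (\<Sum>b\<in>B. c b *\<^sub>R b)"
          using B(4) q(2) unfolding zspan_def by blast
        define c' where "c' = c(v0 := q)"
        have "(\<Sum>b\<in>insert v0 B. c' b *\<^sub>R b) = q *\<^sub>R v0 + (\<Sum>b\<in>B. c' b *\<^sub>R b)"
          using B(1) v0nB by (simp add: c'_def)
        also have "(\<Sum>b\<in>B. c' b *\<^sub>R b) = (\<Sum>b\<in>B. c b *\<^sub>R b)"
          using v0nB by (intro sum.cong) (auto simp: c'_def)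
        finally have "(\<Sum>b\<in>insert v0 B. c' b *\<^sub>R b) = w" using c(2) by (metis add.commute diff_add_cancel)
        moreover have "\<forall>b\<in>insert v0 B. c' b \<in> \<int>" using c(1) q(1) by (auto simp: c'_def)
        ultimately show "\<exists>c. (\<forall>b\<in>insert v0 B. c b \<in> \<int>) \<and> w = (\<Sum>b\<in>insert v0 B. c b *\<^sub>R b)"
          by metis
      qed
    qed
  qed
qed

lemma lattice_basis:
  fixes L :: "(real^'m::finite) set"
  assumes L: "zmod L"
  shows "\<exists>B. finite B \<and> B \<subseteq> L \<and> independent B \<and> zspan B L"
proof -
  have "Lsub L UNIV = L" by (auto simp: Lsub_def)
  then show ?thesis using lattice_basis_aux[OF L, of UNIV] by simp
qed

lemma dot_mv: "(A *v x) \<bullet> y = x \<bullet> (transpose A *v (y::real^'m))"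
  by (simp add: inner_vec_def matrix_vector_mult_def transpose_def sum_distrib_left sum_distrib_right mult_ac)
     (rule sum.swap)

lemma mv_sum: "A *v (\<Sum>i\<in>S. c i *\<^sub>R v i) = (\<Sum>i\<in>S. c i *\<^sub>R (A *v (v i::real^'m)))"
  apply (simp add: vec_eq_iff matrix_vector_mult_def sum_distrib_left sum_distrib_right)
  apply (subst sum.swap)
  apply (simp add: mult_ac)
  done

lemma mv_axis: "(A *v axis k 1) $ j = (A $ j $ k :: real)"
  by (simp add: matrix_vector_mult_def axis_def cong: if_cong)

lemma JJv: "Jmat *v (Jmat *v v) = - (v :: real^('n::finite+'n))"
  by (simp add: matrix_vector_mul_assoc JJ) (simp add: vec_eq_iff matrix_vector_mult_def mat_def sum_negf cong: if_cong)

lemma intv_add: "intv x \<Longrightarrow> intv y \<Longrightarrow> intv (x + y)" by (simp add: intv_def)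
lemma intv_diff: "intv x \<Longrightarrow> intv y \<Longrightarrow> intv (x - y)" by (simp add: intv_def)
lemma intv_neg: "intv x \<Longrightarrow> intv (- x)" by (simp add: intv_def)
lemma intv_mv: "(\<forall>i j. A $ i $ j \<in> \<int>) \<Longrightarrow> intv x \<Longrightarrow> intv (A *v x)"
  by (auto simp: intv_def matrix_vector_mult_def intro!: Ints_sum Ints_mult)

lemma J_int: "\<forall>i j. (Jmat :: 'n::finite bmat) $ i $ j \<in> \<int>"
  by (auto simp: Jmat_def split: sum.splits)

lemma mv_neg: "(- A) *v x = - (A *v (x::real^'m))" "A *v (- x) = - (A *v x)"
  by (simp_all add: vec_eq_iff matrix_vector_mult_def sum_negf)

definition om :: "real^('n::finite+'n) \<Rightarrow> real^('n+'n) \<Rightarrow> real" where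
  "om x y = x \<bullet> (Jmat *v y)"

lemma om_anti: "om x y = - om y x"
proof -
  have "om x y = (transpose Jmat *v x) \<bullet> y" using dot_mv[of "transpose Jmat" x y] by (simp only: transpose_transpose om_def)
  also have "\<dots> = - om y x" by (simp add: transpose_J om_def inner_commute mv_neg)
  finally show ?thesis .
qed

lemma om_nondeg: assumes "\<And>x. om x y = 0" shows "y = 0"
proof -
  have "(Jmat *v y) \<bullet> (Jmat *v y) = 0" using assms[of "Jmat *v y"] by (simp add: om_def)
  then have "Jmat *v y = 0" by simp
  then have "Jmat *v (Jmat *v y) = 0" by simp
  then show ?thesis using JJv[of y] by simp
qed

lemma om_sum_left: "om (\<Sum>i\<in>S. c i *\<^sub>R v i) y = (\<Sum>i\<in>S. c i * om (v i) y)"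
  by (simp add: om_def inner_sum_left)
lemma om_sum_right: "om x (\<Sum>i\<in>S. c i *\<^sub>R v i) = (\<Sum>i\<in>S. c i * om x (v i))"
  by (simp add: om_def mv_sum inner_sum_right)
lemma om_add_left: "om (x + x') y = om x y + om x' y" by (simp add: om_def inner_add_left)
lemma om_diff_right: "om x (y - y') = om x y - om x y'"
  by (simp add: om_def matrix_vector_mult_diff_distrib inner_diff_right)

locale invol =
  fixes s :: "('n::finite) bmat"
  assumes ss: "s ** s = mat 1"
    and sJs: "transpose s ** Jmat ** s = - Jmat"
    and Pint: "\<forall>i j. (mat 1 + s) $ i $ j / 2 \<in> \<int>"
begin

definition Pm :: "'n bmat" where "Pm = (1/2) *\<^sub>R (mat 1 + s)"

definition Lp :: "(real^('n+'n)) set" where "Lp = {v. intv v \<and> s *v v = v}"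

lemma ssv: "s *v (s *v v) = v" by (simp add: matrix_vector_mul_assoc ss)

lemma om_s: "om (s *v x) (s *v y) = - om x y"
proof -
  have "om (s *v x) (s *v y) = x \<bullet> ((transpose s ** Jmat ** s) *v y)"
    by (simp add: om_def dot_mv matrix_vector_mul_assoc matrix_mul_assoc)
  then show ?thesis by (simp add: sJs om_def matrix_vector_mult_def sum_negf vec_eq_iff inner_minus_right)
     (simp add: inner_vec_def sum_negf)
qed

lemma iso_p: "s *v x = x \<Longrightarrow> s *v y = y \<Longrightarrow> om x y = 0"
  using om_s[of x y] by simp

lemma iso_m: "s *v x = - x \<Longrightarrow> s *v y = - y \<Longrightarrow> om x y = 0"
proof -
  assume "s *v x = - x" "s *v y = - y"
  then have "om x y = - om x y" using om_s[of x y] by (simp add: om_def mv_neg)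
  then show ?thesis by simp
qed

lemma Pm_int: "\<forall>i j. Pm $ i $ j \<in> \<int>"
  using Pint by (simp add: Pm_def)

lemma Pm_v: "Pm *v v = (1/2) *\<^sub>R (v + s *v v)"
  by (simp add: Pm_def scaleR_matrix_vector_assoc[symmetric] matrix_vector_mult_add_rdistrib)

lemma s_Pm: "s *v (Pm *v v) = Pm *v v"
  by (simp add: Pm_v matrix_vector_mult_scaleR matrix_vector_right_distrib ssv add.commute)

lemma s_Qm: "s *v (v - Pm *v v) = - (v - Pm *v v)"
proof -
  have "s *v (v - Pm *v v) = s *v v - Pm *v v" using s_Pm by (simp add: matrix_vector_right_distrib matrix_vector_mult_diff_distrib)
  also have "\<dots> = - (v - Pm *v v)" by (simp add: Pm_v algebra_simps) (simp add: scaleR_2[symmetric] vec_eq_iff)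
  finally show ?thesis .
qed

lemma Pm_fix: "s *v v = v \<Longrightarrow> Pm *v v = v"
  by (simp add: Pm_v scaleR_2[symmetric])

lemma zmod_Lp: "zmod Lp"
  unfolding zmod_def Lp_def
  by (auto simp: intv_def matrix_vector_right_distrib matrix_vector_mult_scaleR)

end

lemma sum_delta_vec:
  assumes "finite S" "b' \<in> S"
  shows "(\<Sum>b\<in>S. (if b = b' then 1 else 0) *\<^sub>R (b::real^'m)) = b'"
proof -
  have "(\<Sum>b\<in>S. (if b = b' then 1 else 0) *\<^sub>R b) = (\<Sum>b\<in>S. if b = b' then b else 0)"
    by (rule sum.cong) auto
  also have "\<dots> = b'" using assms by (simp add: sum.delta')
  finally show ?thesis .
qed

lemma sum_delta_real:
  assumes "finite S" "b' \<in> S"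
  shows "(\<Sum>b\<in>S. g b * (if b = b' then 1 else 0)) = (g b' :: real)"
proof -
  have "(\<Sum>b\<in>S. g b * (if b = b' then 1 else 0)) = (\<Sum>b\<in>S. if b = b' then g b else 0)"
    by (rule sum.cong) auto
  also have "\<dots> = g b'" using assms by (simp add: sum.delta')
  finally show ?thesis .
qed

lemma tr_M_entry: "(transpose A ** M ** A) $ x $ y = (\<chi> r. A $ r $ x) \<bullet> (M *v (\<chi> r. A $ r $ (y::'c)))"
  for A :: "real^'c^'m" and M :: "real^'m^'m"
proof -
  have "(transpose A ** M ** A) $ x $ y = (\<Sum>l\<in>UNIV. \<Sum>k\<in>UNIV. A $ k $ x * M $ k $ l * A $ l $ y)"
    by (simp add: matrix_matrix_mult_def transpose_def sum_distrib_right)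
  also have "\<dots> = (\<Sum>k\<in>UNIV. \<Sum>l\<in>UNIV. A $ k $ x * M $ k $ l * A $ l $ y)" by (rule sum.swap)
  also have "\<dots> = (\<chi> r. A $ r $ x) \<bullet> (M *v (\<chi> r. A $ r $ y))"
    by (simp add: inner_vec_def matrix_vector_mult_def sum_distrib_left mult_ac)
  finally show ?thesis .
qed

lemma card_sum_UNIV: "CARD('n::finite + 'n) = 2 * CARD('n)"
proof -
  have "CARD('n + 'n) = card ((UNIV::'n set) <+> (UNIV::'n set))" by simp
  also have "\<dots> = 2 * CARD('n)" by (simp add: card_Plus)
  finally show ?thesis .
qed

context invol
begin

lemma main_h: "\<exists>h \<in> SpZ. s ** h = h ** Emat"
proof -
  obtain Bp where Bp: "finite Bp" "Bp \<subseteq> Lp" "independent Bp" "zspan Bp Lp"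
    using lattice_basis[OF zmod_Lp] by blast
  have BpI: "intv b" if "b \<in> Bp" for b using Bp(2) that by (auto simp: Lp_def)
  have BpS: "s *v b = b" if "b \<in> Bp" for b using Bp(2) that by (auto simp: Lp_def)
  have PL: "Pm *v axis k 1 \<in> Lp" for k
  proof -
    have "intv (axis k 1 :: real^('n+'n))" by (simp add: intv_def axis_def)
    then show ?thesis using s_Pm intv_mv[OF Pm_int] by (simp add: Lp_def)
  qed
  have "\<forall>k. \<exists>c. (\<forall>b\<in>Bp. c b \<in> \<int>) \<and> Pm *v axis k 1 = (\<Sum>b\<in>Bp. c b *\<^sub>R b)"
    using Bp(4) PL by (auto simp: zspan_def)
  then obtain coef where coef: "\<And>k. \<forall>b\<in>Bp. coef k b \<in> \<int>" "\<And>k. Pm *v axis k 1 = (\<Sum>b\<in>Bp. coef k b *\<^sub>R b)"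
    by metis
  define cb where "cb b = (\<chi> k. coef k b)" for b
  have cbI: "intv (cb b)" if "b \<in> Bp" for b using coef(1) that by (simp add: intv_def cb_def)
  have Pexp: "Pm *v v = (\<Sum>b\<in>Bp. (cb b \<bullet> v) *\<^sub>R b)" for v
  proof -
    have e: "Pm $ j $ k = (\<Sum>b\<in>Bp. coef k b * b $ j)" for j k
      using arg_cong[OF coef(2)[of k], of "\<lambda>u. u $ j"] by (simp add: mv_axis)
    have "(Pm *v v) $ j = (\<Sum>b\<in>Bp. (cb b \<bullet> v) *\<^sub>R b) $ j" for j
    proof -
      have "(Pm *v v) $ j = (\<Sum>k\<in>UNIV. \<Sum>b\<in>Bp. coef k b * b $ j * v $ k)"
        by (simp add: matrix_vector_mult_def e sum_distrib_right)
      also have "\<dots> = (\<Sum>b\<in>Bp. \<Sum>k\<in>UNIV. coef k b * b $ j * v $ k)" by (rule sum.swap)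
      also have "\<dots> = (\<Sum>b\<in>Bp. (cb b \<bullet> v) *\<^sub>R b) $ j"
        by (simp add: cb_def inner_vec_def sum_distrib_right sum_distrib_left mult_ac)
      finally show ?thesis .
    qed
    then show ?thesis by (simp add: vec_eq_iff)
  qed
  have indB: "\<forall>c. (\<Sum>v\<in>Bp. c v *\<^sub>R v) = 0 \<longrightarrow> (\<forall>v\<in>Bp. c v = 0)"
    using Bp(3) independent_explicit by blast
  have delta: "cb b \<bullet> b' = (if b = b' then 1 else 0)" if b: "b \<in> Bp" and b': "b' \<in> Bp" for b b'
  proof -
    have "b' = (\<Sum>v\<in>Bp. (cb v \<bullet> b') *\<^sub>R v)" using Pexp[of b'] Pm_fix[OF BpS[OF b']] by simp
    moreover have "b' = (\<Sum>v\<in>Bp. (if v = b' then 1 else 0) *\<^sub>R v)" using sum_delta_vec[OF Bp(1) b'] by simp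
    ultimately have "(\<Sum>v\<in>Bp. (cb v \<bullet> b' - (if v = b' then 1 else 0)) *\<^sub>R v) = 0"
      by (simp add: scaleR_left_diff_distrib sum_subtractf)
    then show ?thesis using indB b by fastforce
  qed
  define y where "y b = - (Jmat *v cb b)" for b
  define f where "f b = y b - Pm *v y b" for b
  have om_f: "om b' (f b) = (if b = b' then 1 else 0)" if b: "b \<in> Bp" and b': "b' \<in> Bp" for b b'
  proof -
    have "om b' (y b) = b' \<bullet> cb b" by (simp add: om_def y_def mv_neg JJv)
    also have "\<dots> = (if b = b' then 1 else 0)" using delta[OF b b'] by (simp add: inner_commute)
    finally have "om b' (y b) = (if b = b' then 1 else 0)" .
    moreover have "om b' (Pm *v y b) = 0" using iso_p[OF BpS[OF b'] s_Pm] .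
    ultimately show ?thesis by (simp add: f_def om_diff_right)
  qed
  have sf: "s *v f b = - f b" for b unfolding f_def by (rule s_Qm)
  have fI: "intv (f b)" if "b \<in> Bp" for b
    unfolding f_def y_def
    by (intro intv_diff intv_neg intv_mv[OF Pm_int] intv_mv[OF J_int] cbI that)
  have inj: "inj_on f Bp"
  proof (rule inj_onI)
    fix b1 b2 assume b: "b1 \<in> Bp" "b2 \<in> Bp" "f b1 = f b2"
    have "om b1 (f b1) = 1" using om_f[OF b(1) b(1)] by simp
    then have "om b1 (f b2) = 1" using b(3) by simp
    then show "b1 = b2" using om_f[OF b(2) b(1)] by (auto split: if_splits)
  qed
  have disj: "Bp \<inter> f ` Bp = {}"
  proof (rule ccontr)
    assume "Bp \<inter> f ` Bp \<noteq> {}"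
    then obtain b2 where b2: "b2 \<in> Bp" "f b2 \<in> Bp" by blast
    have "om b2 (f b2) = 0" using iso_p[OF BpS[OF b2(1)] BpS[OF b2(2)]] .
    then show False using om_f[OF b2(1) b2(1)] by simp
  qed
  have finU: "finite (Bp \<union> f ` Bp)" using Bp(1) by simp
  have indep: "independent (Bp \<union> f ` Bp)"
  proof -
    have "\<forall>v\<in>Bp \<union> f ` Bp. c v = 0" if c: "(\<Sum>v\<in>Bp \<union> f ` Bp. c v *\<^sub>R v) = 0" for c
    proof -
      have "(\<Sum>v\<in>Bp \<union> f ` Bp. c v *\<^sub>R v) = (\<Sum>v\<in>Bp. c v *\<^sub>R v) + (\<Sum>v\<in>f ` Bp. c v *\<^sub>R v)"
        using Bp(1) disj by (simp add: sum.union_disjoint)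
      also have "(\<Sum>v\<in>f ` Bp. c v *\<^sub>R v) = (\<Sum>b\<in>Bp. c (f b) *\<^sub>R f b)"
        using sum.reindex[OF inj] by simp
      finally have z: "(\<Sum>v\<in>Bp. c v *\<^sub>R v) + (\<Sum>b\<in>Bp. c (f b) *\<^sub>R f b) = 0" using c by simp
      have cf: "c (f b') = 0" if b': "b' \<in> Bp" for b'
      proof -
        have "0 = om b' ((\<Sum>v\<in>Bp. c v *\<^sub>R v) + (\<Sum>b\<in>Bp. c (f b) *\<^sub>R f b))" using z by (simp add: om_def)
        also have "\<dots> = (\<Sum>v\<in>Bp. c v * om b' v) + (\<Sum>b\<in>Bp. c (f b) * om b' (f b))"
          by (simp add: om_def matrix_vector_right_distrib inner_add_right om_sum_right[unfolded om_def])
        also have "(\<Sum>v\<in>Bp. c v * om b' v) = 0"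
          using iso_p[OF BpS[OF b'] BpS] by (intro sum.neutral) auto
        also have "(\<Sum>b\<in>Bp. c (f b) * om b' (f b)) = c (f b')"
          using om_f[OF _ b'] sum_delta_real[OF Bp(1) b', of "\<lambda>b. c (f b)"] by (simp cong: sum.cong)
        finally show ?thesis by simp
      qed
      then have "(\<Sum>b\<in>Bp. c (f b) *\<^sub>R f b) = 0" by simp
      with z have "(\<Sum>v\<in>Bp. c v *\<^sub>R v) = 0" by simp
      then have "\<forall>v\<in>Bp. c v = 0" using indB by blast
      then show ?thesis using cf by auto
    qed
    then show ?thesis using finU independent_explicit by blast
  qed
  have spanU: "UNIV \<subseteq> span (Bp \<union> f ` Bp)"
  proof
    fix z :: "real^('n+'n)"
    define w where "w = z - Pm *v z"
    define w' where "w' = w - (\<Sum>b\<in>Bp. om b w *\<^sub>R f b)"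
    have sw: "s *v w = - w" unfolding w_def by (rule s_Qm)
    have sw': "s *v w' = - w'"
      by (simp add: w'_def matrix_vector_mult_diff_distrib mv_sum sw sf sum_negf)
    have o1: "om b' w' = 0" if b': "b' \<in> Bp" for b'
    proof -
      have "om b' w' = om b' w - (\<Sum>b\<in>Bp. om b w * om b' (f b))"
        by (simp add: w'_def om_diff_right om_sum_right)
      also have "(\<Sum>b\<in>Bp. om b w * om b' (f b)) = om b' w"
        using om_f[OF _ b'] sum_delta_real[OF Bp(1) b', of "\<lambda>b. om b w"] by (simp cong: sum.cong)
      finally show ?thesis by simp
    qed
    have "om x w' = 0" for x
    proof -
      have "om x w' = om (Pm *v x) w' + om (x - Pm *v x) w'" by (simp add: om_add_left[symmetric])
      also have "om (Pm *v x) w' = 0" unfolding Pexp om_sum_left using o1 by simp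
      also have "om (x - Pm *v x) w' = 0" using iso_m[OF s_Qm sw'] .
      finally show ?thesis by simp
    qed
    then have "w' = 0" by (rule om_nondeg)
    then have wexp: "w = (\<Sum>b\<in>Bp. om b w *\<^sub>R f b)" by (simp add: w'_def)
    have z: "z = (\<Sum>b\<in>Bp. (cb b \<bullet> z) *\<^sub>R b) + (\<Sum>b\<in>Bp. om b w *\<^sub>R f b)"
      using wexp Pexp[of z] by (simp add: w_def)
    have "(\<Sum>b\<in>Bp. (cb b \<bullet> z) *\<^sub>R b) \<in> span (Bp \<union> f ` Bp)"
      by (intro span_sum span_scale span_base) auto
    moreover have "(\<Sum>b\<in>Bp. om b w *\<^sub>R f b) \<in> span (Bp \<union> f ` Bp)"
      by (intro span_sum span_scale span_base) auto
    ultimately show "z \<in> span (Bp \<union> f ` Bp)" by (subst z) (rule span_add)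
  qed
  have c1: "card (Bp \<union> f ` Bp) = 2 * card Bp"
    using card_Un_disjoint[OF Bp(1) _ disj] card_image[OF inj] Bp(1) by simp
  have c2: "card (Bp \<union> f ` Bp) \<le> DIM(real^('n+'n))" using independent_bound[OF indep] by simp
  have c3: "dim (UNIV :: (real^('n+'n)) set) \<le> card (Bp \<union> f ` Bp)" using dim_le_card[OF spanU finU] .
  have "DIM(real^('n+'n)) = 2 * CARD('n)" by (simp add: card_sum_UNIV)
  then have cardB: "card Bp = CARD('n)" using c1 c2 c3 by (simp add: dim_UNIV)
  obtain \<beta> where bij: "bij_betw \<beta> (UNIV::'n set) Bp"
    using finite_same_card_bij[of "UNIV::'n set" Bp] Bp(1) cardB by auto
  have \<beta>B: "\<beta> i \<in> Bp" for i using bij by (auto simp: bij_betw_def)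
  have \<beta>inj: "\<beta> i = \<beta> j \<longleftrightarrow> i = j" for i j using bij by (auto simp: bij_betw_def inj_on_def)
  define col where "col c = (case c of Inl i \<Rightarrow> \<beta> i | Inr i \<Rightarrow> f (\<beta> i))" for c
  define h :: "'n bmat" where "h = (\<chi> r c. col c $ r)"
  have hcol: "(\<chi> r. h $ r $ c) = col c" for c by (simp add: h_def vec_eq_iff)
  have hJ: "transpose h ** Jmat ** h = Jmat"
  proof (rule bmat_eqI)
    fix a b
    show "(transpose h ** Jmat ** h) $ Inl a $ Inl b = Jmat $ Inl a $ Inl b"
      unfolding tr_M_entry hcol om_def[symmetric] using iso_p[OF BpS[OF \<beta>B] BpS[OF \<beta>B]]
      by (simp add: col_def Jmat_entries)
    show "(transpose h ** Jmat ** h) $ Inl a $ Inr b = Jmat $ Inl a $ Inr b"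
      unfolding tr_M_entry hcol om_def[symmetric]
      by (simp add: col_def Jmat_entries om_f[OF \<beta>B \<beta>B] \<beta>inj eq_commute)
    show "(transpose h ** Jmat ** h) $ Inr a $ Inl b = Jmat $ Inr a $ Inl b"
      unfolding tr_M_entry hcol om_def[symmetric]
      by (simp add: col_def Jmat_entries om_anti[of "f (\<beta> a)"] om_f[OF \<beta>B \<beta>B] \<beta>inj)
    show "(transpose h ** Jmat ** h) $ Inr a $ Inr b = Jmat $ Inr a $ Inr b"
      unfolding tr_M_entry hcol om_def[symmetric] using iso_m[OF sf sf]
      by (simp add: col_def Jmat_entries)
  qed
  have hI: "\<forall>i j. h $ i $ j \<in> \<int>"
  proof (intro allI)
    fix i j
    show "h $ i $ j \<in> \<int>" using BpI[OF \<beta>B] fI[OF \<beta>B]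
      by (cases j) (simp_all add: h_def col_def intv_def)
  qed
  have hS: "h \<in> SpZ" using hJ hI by (simp add: SpZ_def Sp_def)
  have sh: "s ** h = h ** Emat"
  proof -
    have "(s ** h) $ r $ c = (h ** Emat) $ r $ c" for r c
    proof -
      have l: "(s ** h) $ r $ c = (s *v col c) $ r"
        by (simp add: matrix_matrix_mult_def matrix_vector_mult_def hcol[symmetric])
      show ?thesis
      proof (cases c)
        case (Inl i)
        then show ?thesis using l BpS[OF \<beta>B]
          by (simp add: mult_entry Emat_entries h_def col_def)
      next
        case (Inr i)
        then show ?thesis using l sf
          by (simp add: mult_entry Emat_entries h_def col_def)
      qed
    qed
    then show ?thesis by (simp add: vec_eq_iff)
  qed
  show ?thesis using hS sh by blast
qed

end

lemma partD:
  fixes \<gamma> :: "('n::finite) bmat"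
  assumes g: "\<gamma> \<in> Gamma2" and t: "tau_mat \<gamma> ** \<gamma> = mat 1"
  shows "\<exists>h\<in>SpZ. \<gamma> = tau_mat h ** matrix_inv h"
proof -
  have gS: "\<gamma> \<in> Sp" using g by (simp add: Gamma2_def SpZ_def)
  define s where "s = Emat ** \<gamma>"
  have ss: "s ** s = mat 1" using t by (simp add: s_def tau_mat_E matrix_mul_assoc)
  have sJs: "transpose s ** Jmat ** s = - Jmat"
  proof -
    have "transpose s ** Jmat ** s = transpose \<gamma> ** (Emat ** Jmat ** Emat) ** \<gamma>"
      by (simp add: s_def matrix_transpose_mul transpose_E matrix_mul_assoc)
    also have "\<dots> = - (transpose \<gamma> ** Jmat ** \<gamma>)" by (simp add: EJE mat_neg_mult matrix_mul_assoc)
    also have "\<dots> = - Jmat" using gS by (simp add: Sp_def)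
    finally show ?thesis .
  qed
  obtain K where K: "\<And>i j. \<gamma> $ i $ j = mat 1 $ i $ j + 2 * of_int (K i j)" using Gamma2_K[OF g] by blast
  have sE: "s $ i $ j = (case i of Inl _ \<Rightarrow> \<gamma> $ i $ j | Inr _ \<Rightarrow> - \<gamma> $ i $ j)" for i j
    by (cases i) (simp_all add: s_def mult_entry Emat_entries sum_negf)
  have Pint: "\<forall>i j. (mat 1 + s) $ i $ j / 2 \<in> \<int>"
  proof (intro allI)
    fix i j
    show "(mat 1 + s) $ i $ j / 2 \<in> \<int>"
    proof (cases i)
      case (Inl a)
      then have e: "(mat 1 + s) $ i $ j / 2 = mat 1 $ i $ j + of_int (K i j)" using K[of i j] sE[of i j] by simp
      have m: "(mat 1 :: 'n bmat) $ i $ j \<in> \<int>" by (simp add: mat_def)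
      show ?thesis unfolding e by (rule Ints_add[OF m Ints_of_int])
    next
      case (Inr a)
      then have "(mat 1 + s) $ i $ j / 2 = - of_int (K i j)" using K[of i j] sE[of i j] by simp
      then show ?thesis by simp
    qed
  qed
  interpret invol s using ss sJs Pint by unfold_locales
  obtain h where h: "h \<in> SpZ" "s ** h = h ** Emat" using main_h by blast
  have hS: "h \<in> Sp" using h(1) by (simp add: SpZ_def)
  have gE: "\<gamma> = Emat ** s" by (simp add: s_def matrix_mul_assoc EE)
  have gh: "\<gamma> ** h = tau_mat h"
    by (simp add: gE tau_mat_E h(2) flip: matrix_mul_assoc)
  have "\<gamma> = \<gamma> ** (h ** matrix_inv h)" using Sp_inv[OF hS] by simp
  also have "\<dots> = tau_mat h ** matrix_inv h" by (simp add: matrix_mul_assoc gh)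
  finally show ?thesis using h(1) by blast
qed

theorem proposition4p7:
  fixes \<gamma> :: "('n::finite) bmat" and Z :: "complex^'n^'n"
  assumes "\<gamma> \<in> Gamma2"
    and "Z \<in> siegel"
    and "\<forall>g \<in> SpZ. sp_act g Z = Z \<longrightarrow> g = mat 1 \<or> g = - mat 1"
    and "tau_pt Z = sp_act \<gamma> Z"
  shows "\<exists>h \<in> (SpZ :: 'n bmat set). \<gamma> = tau_mat h ** matrix_inv h
           \<and> fixset \<gamma> = sp_act h ` iCn"
proof -
  have gZ: "\<gamma> \<in> SpZ" using assms(1) by (simp add: Gamma2_def)
  have "tau_mat \<gamma> ** \<gamma> = mat 1 \<or> tau_mat \<gamma> ** \<gamma> = - mat 1"
    using tau_gamma_fix[OF gZ assms(2) assms(3) assms(4)] .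
  then have t: "tau_mat \<gamma> ** \<gamma> = mat 1" using Gamma2_not_neg[OF assms(1)] by blast
  obtain h where h: "h \<in> SpZ" "\<gamma> = tau_mat h ** matrix_inv h" using partD[OF assms(1) t] by blast
  have "fixset \<gamma> = sp_act h ` iCn" using fixset_eq[of h \<gamma>] h by (simp add: SpZ_def)
  then show ?thesis using h by blast
qed

end
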